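(* Let $N\in\mathbb{C}^{m\times n}$ have rank $r$ and singular value decomposition $N=U\begin{pmatrix}\Sigma & 0\\ 0 & 0\end{pmatrix}V^{\ast}$, where $\Sigma\in\mathbb{C}^{r\times r}$ is diagonal with positive diagonal entries and $U\in\mathbb{C}^{m\times m}$, $V\in\mathbb{C}^{n\times n}$ are unitary. Let $X\in\mathbb{C}^{m\times m}$ be arbitrary. Suppose that one of the following conditions holds: (C1) $NN^{\ast}X$ is normal; (C2) there exist $0\neq c_{1}\in\mathbb{C}$ and $k_{1}\in\mathbb{N}^{+}$ such that $(NN^{\ast}X)^{k_{1}}=c_{1}NN^{\dagger}$; (C3) there exist $0\neq c_{2}\in\mathbb{C}$, $\ell\in\mathbb{N}^{+}$ and $k_{2}\in\mathbb{N}^{+}$ such that $(NN^{\ast}X)^{k_{2}}=c_{2}(NN^{\ast})^{\ell}$; (C4) $XE_{N}$ is normal; (C5) there exist $0\neq c_{3}\in\mathbb{C}$ and $k_{3}\in\mathbb{N}^{+}$ such that $(XE_{N})^{k_{3}}=c_{3}E_{N}$; (C6) $NN^{\dagger}XE_{N}=0$; (C7) there exists $k_{4}\in\mathbb{N}^{+}$ such that $(NN^{\ast})^{k_{4}}XE_{N}=0$. Then $X=U\begin{pmatrix}X_{1} & 0\\ X_{2} & X_{4}\end{pmatrix}U^{\ast}$ for some $X_{1}\in\mathbb{C}^{r\times r}$, $X_{2}\in\mathbb{C}^{(m-r)\times r}$, $X_{4}\in\mathbb{C}^{(m-r)\times(m-r)}$.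
   Context: $\mathbb{N}^{+}$ is the set of positive integers. For a complex matrix $A$, $A^{\ast}$ is its conjugate transpose, $A^{\dagger}$ its Moore--Penrose inverse, and $E_{A}:=I-AA^{\dagger}$. A square matrix $B$ is normal if $BB^{\ast}=B^{\ast}B$. *)

theory Defs
  imports "Jordan_Normal_Form.Schur_Decomposition" "Jordan_Normal_Form.DL_Rank"
begin

definition unitary_mat :: "nat \<Rightarrow> complex mat \<Rightarrow> bool" where
  "unitary_mat k U \<longleftrightarrow> U \<in> carrier_mat k k \<and>
     U * mat_adjoint U = 1\<^sub>m k \<and> mat_adjoint U * U = 1\<^sub>m k"

definition normal_mat :: "complex mat \<Rightarrow> bool" where
  "normal_mat B \<longleftrightarrow> dim_row B = dim_col B \<and> B * mat_adjoint B = mat_adjoint B * B"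

definition is_mp_inverse :: "complex mat \<Rightarrow> complex mat \<Rightarrow> bool" where
  "is_mp_inverse A B \<longleftrightarrow> B \<in> carrier_mat (dim_col A) (dim_row A) \<and>
     A * B * A = A \<and> B * A * B = B \<and>
     mat_adjoint (A * B) = A * B \<and> mat_adjoint (B * A) = B * A"

definition mp_inverse :: "complex mat \<Rightarrow> complex mat" where
  "mp_inverse A = (THE B. is_mp_inverse A B)"

definition E_mat :: "complex mat \<Rightarrow> complex mat" where
  "E_mat A = 1\<^sub>m (dim_row A) - A * mp_inverse A"

end

theory Submission imports Defs begin
declare minus_carrier_mat[simp]

lemma adj_eq: "mat_adjoint (A::complex mat) = mat (dim_col A) (dim_row A) (\<lambda>(i,j). cnj (A $$ (j,i)))"
  unfolding mat_adjoint_def by (rule eq_matI) (auto simp: mat_of_rows_def)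

lemma adj_index[simp]: "i < dim_col A \<Longrightarrow> j < dim_row A \<Longrightarrow> mat_adjoint (A::complex mat) $$ (i,j) = cnj (A $$ (j,i))"
  "dim_row (mat_adjoint A) = dim_col A" "dim_col (mat_adjoint A) = dim_row A"
  by (auto simp: adj_eq)
lemma s1: "(\<Sum>k<(n::nat). (A::complex mat) $$ (i,k) * cnj (A $$ (i,k))) = 0 \<Longrightarrow> (\<Sum>k<n. complex_of_real ((cmod (A $$ (i,k)))^2)) = 0"
proof -
  assume a: "(\<Sum>k<(n::nat). (A::complex mat) $$ (i,k) * cnj (A $$ (i,k))) = 0"
  have "\<And>k. A $$ (i,k) * cnj (A $$ (i,k)) = complex_of_real ((cmod (A $$ (i,k)))^2)"
    by (metis complex_norm_square)
  then show ?thesis using a by simp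
qed
lemma s2: "(\<Sum>k<(n::nat). complex_of_real ((cmod (f k))^2)) = 0 \<Longrightarrow> (\<Sum>k<n. (cmod (f k))^2) = 0"
  by (metis of_real_eq_0_iff of_real_sum)
lemma s3: "(\<Sum>k<(n::nat). (cmod (f k))^2) = 0 \<Longrightarrow> j < n \<Longrightarrow> f j = 0"
  by (subst (asm) sum_nonneg_eq_0_iff) simp_all
lemma mult_adj_zero: assumes A: "A \<in> carrier_mat m n" and z: "A * mat_adjoint A = 0\<^sub>m m m"
  shows "A = (0\<^sub>m m n :: complex mat)"
proof (rule eq_matI)
  fix i j assume i: "i < dim_row (0\<^sub>m m n :: complex mat)" and j: "j < dim_col (0\<^sub>m m n :: complex mat)"
  have im: "i < m" and jn: "j < n" using i j by auto
  have "(A * mat_adjoint A) $$ (i,i) = 0" using z im by (simp del: adj_index)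
  moreover have "(A * mat_adjoint A) $$ (i,i) = (\<Sum>k<n. A $$ (i,k) * cnj (A $$ (i,k)))"
    using A im by (simp add: scalar_prod_def lessThan_atLeast0)
  ultimately have "A $$ (i,j) = 0" using s3[OF s2[OF s1[where n=n and A=A and i=i]] jn] by simp
  thus "A $$ (i,j) = 0\<^sub>m m n $$ (i,j)" using im jn by simp
next
  show "dim_row A = dim_row (0\<^sub>m m n :: complex mat)" "dim_col A = dim_col (0\<^sub>m m n :: complex mat)" using A by auto
qed
lemma adj_carrier[simp]: "A \<in> carrier_mat m n \<Longrightarrow> mat_adjoint (A::complex mat) \<in> carrier_mat n m"
  unfolding carrier_mat_def by simp

lemma adj_adj[simp]: "mat_adjoint (mat_adjoint (A::complex mat)) = A"
  by (rule eq_matI) simp_all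

lemma adj_mult: assumes "dim_col (A::complex mat) = dim_row B"
  shows "mat_adjoint (A * B) = mat_adjoint B * mat_adjoint A"
  using assms by (intro eq_matI) (auto simp: scalar_prod_def intro!: sum.cong)

lemma adj_minus: assumes "A \<in> carrier_mat m n" "B \<in> carrier_mat m n"
  shows "mat_adjoint (A - B :: complex mat) = mat_adjoint A - mat_adjoint B"
  using assms by (intro eq_matI) auto

lemma adj_one[simp]: "mat_adjoint (1\<^sub>m n :: complex mat) = 1\<^sub>m n"
  by (intro eq_matI) auto

lemma adj_mult_zero: assumes A: "A \<in> carrier_mat m n" and z: "mat_adjoint A * A = 0\<^sub>m n n"
  shows "A = (0\<^sub>m m n :: complex mat)"
proof -
  have "mat_adjoint A = 0\<^sub>m n m" using mult_adj_zero[of "mat_adjoint A" n m] A z by simp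
  moreover have "mat_adjoint (0\<^sub>m n m :: complex mat) = 0\<^sub>m m n" by (rule eq_matI) auto
  ultimately show ?thesis by (metis adj_adj)
qed

lemma pow_comm: assumes "A \<in> carrier_mat n n" shows "A * A ^\<^sub>m k = A ^\<^sub>m k * A"
proof (induct k)
  case (Suc k)
  have "A * A ^\<^sub>m Suc k = (A * A ^\<^sub>m k) * A" using assms by (simp add: assoc_mult_mat[of _ n n _ n _ n])
  also have "\<dots> = A ^\<^sub>m Suc k * A" using Suc by simp
  finally show ?case .
qed (use assms in auto)


lemma smult_cancel: assumes "c \<noteq> 0" "A \<in> carrier_mat m n" "B \<in> carrier_mat m n"
  and "c \<cdot>\<^sub>m A = c \<cdot>\<^sub>m (B::complex mat)" shows "A = B"
proof (rule eq_matI)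
  fix i j assume "i < dim_row B" "j < dim_col B"
  hence "(c \<cdot>\<^sub>m A) $$ (i,j) = (c \<cdot>\<^sub>m B) $$ (i,j)" using assms by simp
  thus "A $$ (i,j) = B $$ (i,j)" using assms(1-3) \<open>i < dim_row B\<close> \<open>j < dim_col B\<close> by simp
qed (use assms in auto)


context
  fixes P M G X :: "complex mat" and m :: nat
  assumes c: "P \<in> carrier_mat m m" "M \<in> carrier_mat m m" "G \<in> carrier_mat m m" "X \<in> carrier_mat m m"
  and PP: "P * P = P" and Ph: "mat_adjoint P = P" and PM: "P * M = M" and MP: "M * P = M"
  and GM: "G * M = P" and Mh: "mat_adjoint M = M"
begin

lemma cE[simp]: "1\<^sub>m m - P \<in> carrier_mat m m" using c by simp

lemmas cs[simp] = c cE carrier_matD[OF c(1)] carrier_matD[OF c(2)] carrier_matD[OF c(3)] carrier_matD[OF c(4)]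
   carrier_matD[OF cE] assoc_mult_mat[of _ m m _ m _ m] mult_carrier_mat[of _ m m _ m]

lemma PE: "P * (1\<^sub>m m - P) = 0\<^sub>m m m" using PP by (subst mult_minus_distrib_mat[of P m m]) auto
lemma EP: "(1\<^sub>m m - P) * P = 0\<^sub>m m m" using PP by (subst minus_mult_distrib_mat[of _ m m]) auto
lemma EE: "(1\<^sub>m m - P) * (1\<^sub>m m - P) = 1\<^sub>m m - P" using PE by (subst minus_mult_distrib_mat[of _ m m]) auto
lemma EM: "(1\<^sub>m m - P) * M = 0\<^sub>m m m"
proof -
  have "(1\<^sub>m m - P) * M = ((1\<^sub>m m - P) * P) * M" using PM by simp
  thus ?thesis using EP by simp
qed
lemma ME: "M * (1\<^sub>m m - P) = 0\<^sub>m m m"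
proof -
  have "M * (1\<^sub>m m - P) = (M * P) * (1\<^sub>m m - P)" using MP by simp
  thus ?thesis using PE by simp
qed
lemma Eh: "mat_adjoint (1\<^sub>m m - P) = 1\<^sub>m m - P" using Ph by (subst adj_minus[of _ m m]) auto

lemma PMk: "k > 0 \<Longrightarrow> P * M ^\<^sub>m k = M ^\<^sub>m k"
proof (induct k)
  case (Suc k)
  show ?case
  proof (cases "k = 0")
    case True thus ?thesis using PM by simp
  next
    case False
    have "P * M ^\<^sub>m Suc k = (P * M ^\<^sub>m k) * M" by simp
    thus ?thesis using Suc False by simp
  qed
qed simp

lemma GkMk: "k > 0 \<Longrightarrow> G ^\<^sub>m k * M ^\<^sub>m k = P"
proof (induct k)
  case (Suc k)
  show ?case
  proof (cases "k = 0")
    case True thus ?thesis using GM by simp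
  next
    case False
    have "G ^\<^sub>m Suc k * M ^\<^sub>m Suc k = G ^\<^sub>m k * (G * (M * M ^\<^sub>m k))"
      using pow_comm[of M m k] by simp
    also have "\<dots> = G ^\<^sub>m k * ((G * M) * M ^\<^sub>m k)" by simp
    also have "\<dots> = G ^\<^sub>m k * M ^\<^sub>m k" using GM PMk False by simp
    finally show ?thesis using Suc False by simp
  qed
qed simp

lemma K7: assumes "k > 0" "M ^\<^sub>m k * X * (1\<^sub>m m - P) = 0\<^sub>m m m"
  shows "P * X * (1\<^sub>m m - P) = 0\<^sub>m m m"
proof -
  have "P * X * (1\<^sub>m m - P) = (G ^\<^sub>m k * M ^\<^sub>m k) * X * (1\<^sub>m m - P)" using GkMk[OF assms(1)] by simp
  also have "\<dots> = G ^\<^sub>m k * (M ^\<^sub>m k * X * (1\<^sub>m m - P))" by simp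
  finally show ?thesis using assms(2) by simp
qed

lemma K1: "M * X * (1\<^sub>m m - P) = 0\<^sub>m m m \<Longrightarrow> P * X * (1\<^sub>m m - P) = 0\<^sub>m m m"
  using K7[of 1] by simp

lemma PA: "P * (M * X) = M * X"
proof -
  have "P * (M * X) = (P * M) * X" by simp
  thus ?thesis using PM by simp
qed

lemma case1: assumes "normal_mat (M * X)" shows "P * X * (1\<^sub>m m - P) = 0\<^sub>m m m"
proof -
  define A where "A = M * X"
  define E where "E = 1\<^sub>m m - P"
  have Ac[simp]: "A \<in> carrier_mat m m" "E \<in> carrier_mat m m" unfolding A_def E_def by auto
  note [simp] = carrier_matD[OF Ac(1)] carrier_matD[OF Ac(2)]
  have nA: "A * mat_adjoint A = mat_adjoint A * A" using assms unfolding normal_mat_def A_def by simp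
  have EA: "E * A = 0\<^sub>m m m"
  proof -
    have "E * A = (E * M) * X" unfolding A_def by simp
    thus ?thesis using EM unfolding E_def by simp
  qed
  have s1: "mat_adjoint (A * E) * (A * E) = (E * mat_adjoint A) * (A * E)"
    using Eh unfolding E_def by (simp add: adj_mult)
  have s2: "(E * mat_adjoint A) * (A * E) = E * ((mat_adjoint A * A) * E)" by simp
  have s3: "E * ((mat_adjoint A * A) * E) = E * ((A * mat_adjoint A) * E)" using nA by simp
  have s4: "E * ((A * mat_adjoint A) * E) = (E * A) * (mat_adjoint A * E)" by simp
  have s5: "(E * A) * (mat_adjoint A * E) = 0\<^sub>m m m" unfolding EA by (rule left_mult_zero_mat) auto
  have AE0: "mat_adjoint (A * E) * (A * E) = 0\<^sub>m m m" by (rule trans[OF s1 trans[OF s2 trans[OF s3 trans[OF s4 s5]]]])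
  have "A * E = 0\<^sub>m m m" by (rule adj_mult_zero[OF _ AE0]) simp
  thus ?thesis using K1 unfolding A_def E_def by simp
qed


lemma case2: assumes "c1 \<noteq> 0" "k1 > 0" "(M * X) ^\<^sub>m k1 = c1 \<cdot>\<^sub>m P"
  shows "P * X * (1\<^sub>m m - P) = 0\<^sub>m m m"
proof -
  define A where "A = M * X"
  have Ac[simp]: "A \<in> carrier_mat m m" unfolding A_def by auto
  note [simp] = carrier_matD[OF Ac(1)]
  have pA: "A ^\<^sub>m k1 = c1 \<cdot>\<^sub>m P" using assms(3) unfolding A_def .
  have PA': "P * A = A" unfolding A_def by (rule PA)
  have "A ^\<^sub>m Suc k1 = (c1 \<cdot>\<^sub>m P) * A" unfolding pow_mat.simps pA ..
  also have "\<dots> = c1 \<cdot>\<^sub>m (P * A)" by (rule mult_smult_assoc_mat[of _ m m _ m]) auto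
  finally have 1: "A ^\<^sub>m Suc k1 = c1 \<cdot>\<^sub>m A" unfolding PA' .
  have "A ^\<^sub>m Suc k1 = A * A ^\<^sub>m k1" using pow_comm[of A m k1] by simp
  also have "\<dots> = A * (c1 \<cdot>\<^sub>m P)" unfolding pA ..
  also have "\<dots> = c1 \<cdot>\<^sub>m (A * P)" by (rule mult_smult_distrib[of _ m m _ m]) auto
  finally have "c1 \<cdot>\<^sub>m A = c1 \<cdot>\<^sub>m (A * P)" unfolding 1 .
  note sm = this
  have AP: "A = A * P" by (rule smult_cancel[OF assms(1) _ _ sm, of m m]) simp_all
  have "A * (1\<^sub>m m - P) = A * 1\<^sub>m m - A * P" by (rule mult_minus_distrib_mat[of _ m m]) auto
  also have "\<dots> = A - A" using AP by simp
  also have "\<dots> = 0\<^sub>m m m" by simp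
  finally show ?thesis using K1 unfolding A_def by blast
qed

lemma MlE: "l > 0 \<Longrightarrow> M ^\<^sub>m l * (1\<^sub>m m - P) = 0\<^sub>m m m"
proof -
  assume "l > 0"
  then obtain l' where l: "l = Suc l'" by (cases l) auto
  have "M ^\<^sub>m l * (1\<^sub>m m - P) = M ^\<^sub>m l' * (M * (1\<^sub>m m - P))" unfolding l pow_mat.simps
    by (rule assoc_mult_mat[of _ m m _ m _ m]) auto
  also have "\<dots> = 0\<^sub>m m m" unfolding ME by (rule right_mult_zero_mat) auto
  finally show ?thesis .
qed

lemma case3: assumes "c2 \<noteq> 0" "l > 0" "k2 > 0" "(M * X) ^\<^sub>m k2 = c2 \<cdot>\<^sub>m (M ^\<^sub>m l)"
  shows "P * X * (1\<^sub>m m - P) = 0\<^sub>m m m"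
proof -
  define A where "A = M * X"
  define L where "L = M ^\<^sub>m l"
  have Ac[simp]: "A \<in> carrier_mat m m" "L \<in> carrier_mat m m" unfolding A_def L_def by auto
  note [simp] = carrier_matD[OF Ac(1)] carrier_matD[OF Ac(2)]
  have pA: "A ^\<^sub>m k2 = c2 \<cdot>\<^sub>m L" using assms(4) unfolding A_def L_def .
  have "A ^\<^sub>m Suc k2 = (c2 \<cdot>\<^sub>m L) * A" unfolding pow_mat.simps pA ..
  also have "\<dots> = c2 \<cdot>\<^sub>m (L * A)" by (rule mult_smult_assoc_mat[of _ m m _ m]) auto
  finally have 1: "A ^\<^sub>m Suc k2 = c2 \<cdot>\<^sub>m (L * A)" .
  have "A ^\<^sub>m Suc k2 = A * A ^\<^sub>m k2" using pow_comm[of A m k2] by simp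
  also have "\<dots> = A * (c2 \<cdot>\<^sub>m L)" unfolding pA ..
  also have "\<dots> = c2 \<cdot>\<^sub>m (A * L)" by (rule mult_smult_distrib[of _ m m _ m]) auto
  finally have "c2 \<cdot>\<^sub>m (L * A) = c2 \<cdot>\<^sub>m (A * L)" unfolding 1 .
  note sm = this
  have eq: "L * A = A * L" by (rule smult_cancel[OF assms(1) _ _ sm, of m m]) simp_all
  have LE: "L * (1\<^sub>m m - P) = 0\<^sub>m m m" unfolding L_def using MlE[OF assms(2)] .
  have "M ^\<^sub>m Suc l * X * (1\<^sub>m m - P) = (L * A) * (1\<^sub>m m - P)" unfolding L_def A_def pow_mat.simps
    by simp
  also have "\<dots> = (A * L) * (1\<^sub>m m - P)" unfolding eq ..
  also have "\<dots> = A * (L * (1\<^sub>m m - P))" by (rule assoc_mult_mat[of _ m m _ m _ m]) auto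
  also have "\<dots> = 0\<^sub>m m m" unfolding LE by (rule right_mult_zero_mat) auto
  finally show ?thesis using K7[of "Suc l"] by blast
qed

lemma case4: assumes "normal_mat (X * (1\<^sub>m m - P))"
  shows "P * X * (1\<^sub>m m - P) = 0\<^sub>m m m"
proof -
  define B where "B = X * (1\<^sub>m m - P)"
  have Bc[simp]: "B \<in> carrier_mat m m" unfolding B_def by auto
  note [simp] = carrier_matD[OF Bc(1)]
  have nB: "B * mat_adjoint B = mat_adjoint B * B" using assms unfolding normal_mat_def B_def by simp
  have BP: "B * P = 0\<^sub>m m m"
  proof -
    have "B * P = X * ((1\<^sub>m m - P) * P)" unfolding B_def by (rule assoc_mult_mat[of _ m m _ m _ m]) auto
    also have "\<dots> = 0\<^sub>m m m" unfolding EP by (rule right_mult_zero_mat) auto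
    finally show ?thesis .
  qed
  have s1: "(P * B) * mat_adjoint (P * B) = (P * B) * (mat_adjoint B * P)"
    using Ph by (simp add: adj_mult)
  have s2: "(P * B) * (mat_adjoint B * P) = P * ((B * mat_adjoint B) * P)" by simp
  have s3: "P * ((B * mat_adjoint B) * P) = P * ((mat_adjoint B * B) * P)" unfolding nB ..
  have s4: "P * ((mat_adjoint B * B) * P) = (P * mat_adjoint B) * (B * P)" by simp
  have s5: "(P * mat_adjoint B) * (B * P) = 0\<^sub>m m m" unfolding BP by (rule right_mult_zero_mat) auto
  have PB0: "(P * B) * mat_adjoint (P * B) = 0\<^sub>m m m" by (rule trans[OF s1 trans[OF s2 trans[OF s3 trans[OF s4 s5]]]])
  have "P * B = 0\<^sub>m m m" by (rule mult_adj_zero[OF _ PB0]) simp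
  moreover have "P * B = P * X * (1\<^sub>m m - P)" unfolding B_def by simp
  ultimately show ?thesis by simp
qed

lemma case5: assumes "c3 \<noteq> 0" "k3 > 0" "(X * (1\<^sub>m m - P)) ^\<^sub>m k3 = c3 \<cdot>\<^sub>m (1\<^sub>m m - P)"
  shows "P * X * (1\<^sub>m m - P) = 0\<^sub>m m m"
proof -
  define B where "B = X * (1\<^sub>m m - P)"
  define E where "E = 1\<^sub>m m - P"
  have Bc[simp]: "B \<in> carrier_mat m m" "E \<in> carrier_mat m m" unfolding B_def E_def by auto
  note [simp] = carrier_matD[OF Bc(1)] carrier_matD[OF Bc(2)]
  have pB: "B ^\<^sub>m k3 = c3 \<cdot>\<^sub>m E" using assms(3) unfolding B_def E_def .
  have BE: "B * E = B"
  proof -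
    have "B * E = X * (E * E)" unfolding B_def E_def by (rule assoc_mult_mat[of _ m m _ m _ m]) auto
    thus ?thesis unfolding E_def EE B_def .
  qed
  have "B ^\<^sub>m Suc k3 = (c3 \<cdot>\<^sub>m E) * B" unfolding pow_mat.simps pB ..
  also have "\<dots> = c3 \<cdot>\<^sub>m (E * B)" by (rule mult_smult_assoc_mat[of _ m m _ m]) auto
  finally have 1: "B ^\<^sub>m Suc k3 = c3 \<cdot>\<^sub>m (E * B)" .
  have "B ^\<^sub>m Suc k3 = B * B ^\<^sub>m k3" using pow_comm[of B m k3] by simp
  also have "\<dots> = B * (c3 \<cdot>\<^sub>m E)" unfolding pB ..
  also have "\<dots> = c3 \<cdot>\<^sub>m (B * E)" by (rule mult_smult_distrib[of _ m m _ m]) auto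
  finally have "c3 \<cdot>\<^sub>m (E * B) = c3 \<cdot>\<^sub>m B" unfolding 1 BE .
  note sm = this
  have EB: "E * B = B" by (rule smult_cancel[OF assms(1) _ _ sm, of m m]) simp_all
  have "P * B = P * (E * B)" unfolding EB ..
  also have "\<dots> = (P * E) * B" by (rule assoc_mult_mat[symmetric, of _ m m _ m _ m]) auto
  also have "\<dots> = 0\<^sub>m m m" unfolding E_def PE by (rule left_mult_zero_mat) auto
  finally have "P * B = 0\<^sub>m m m" .
  moreover have "P * B = P * X * (1\<^sub>m m - P)" unfolding B_def by simp
  ultimately show ?thesis by simp
qed

end



declare cs[simp del] cE[simp del]

lemma assoc_dim: "dim_col A = dim_row B \<Longrightarrow> dim_col B = dim_row C \<Longrightarrow> (A * B) * C = A * (B * (C :: 'a :: semiring_0 mat))"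
  by (rule assoc_mult_mat[of A "dim_row A" "dim_col A" B "dim_col B" C "dim_col C"]) (rule carrier_matI; simp)+


lemma mp_unique:
  fixes A B C :: "complex mat"
  assumes A: "A \<in> carrier_mat m n" and hB: "is_mp_inverse A B" and hC: "is_mp_inverse A C"
  shows "B = C"
proof -
  have B: "B \<in> carrier_mat n m" using hB[unfolded is_mp_inverse_def, THEN conjunct1] carrier_matD[OF A] by simp
  have C: "C \<in> carrier_mat n m" using hC[unfolded is_mp_inverse_def, THEN conjunct1] carrier_matD[OF A] by simp
  note cs[simp] = A B C carrier_matD[OF A] carrier_matD[OF B] carrier_matD[OF C] assoc_dim
  note hB' = hB[unfolded is_mp_inverse_def]
  note B1 = hB'[THEN conjunct2, THEN conjunct1]
  note B2 = hB'[THEN conjunct2, THEN conjunct2, THEN conjunct1]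
  note B3 = hB'[THEN conjunct2, THEN conjunct2, THEN conjunct2, THEN conjunct1]
  note B4 = hB'[THEN conjunct2, THEN conjunct2, THEN conjunct2, THEN conjunct2]
  note hC' = hC[unfolded is_mp_inverse_def]
  note C1 = hC'[THEN conjunct2, THEN conjunct1]
  note C2 = hC'[THEN conjunct2, THEN conjunct2, THEN conjunct1]
  note C3 = hC'[THEN conjunct2, THEN conjunct2, THEN conjunct2, THEN conjunct1]
  note C4 = hC'[THEN conjunct2, THEN conjunct2, THEN conjunct2, THEN conjunct2]
  have aA1: "mat_adjoint A = mat_adjoint A * (A * C)"
  proof -
    have "mat_adjoint A = mat_adjoint ((A * C) * A)" using C1 by simp
    also have "\<dots> = mat_adjoint A * mat_adjoint (A * C)" by (rule adj_mult) simp
    also have "\<dots> = mat_adjoint A * (A * C)" unfolding C3 ..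
    finally show ?thesis .
  qed
  have aA2: "mat_adjoint A = (B * A) * mat_adjoint A"
  proof -
    have "mat_adjoint A = mat_adjoint (A * (B * A))" using B1 by simp
    also have "\<dots> = mat_adjoint (B * A) * mat_adjoint A" by (rule adj_mult) simp
    also have "\<dots> = (B * A) * mat_adjoint A" unfolding B4 ..
    finally show ?thesis .
  qed
  have "B = B * (A * B)" using B2 by simp
  also have "\<dots> = B * mat_adjoint (A * B)" unfolding B3 ..
  also have "\<dots> = B * (mat_adjoint B * mat_adjoint A)" by (subst adj_mult) simp_all
  also have "\<dots> = B * (mat_adjoint B * (mat_adjoint A * (A * C)))" using aA1 by simp
  also have "\<dots> = B * ((mat_adjoint B * mat_adjoint A) * (A * C))" by simp
  also have "\<dots> = B * (mat_adjoint (A * B) * (A * C))" by (subst adj_mult) simp_all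
  also have "\<dots> = (B * (A * B)) * (A * C)" unfolding B3 by simp
  also have "\<dots> = B * (A * C)" using B2 by simp
  finally have 1: "B = B * (A * C)" .
  have "C = (C * A) * C" using C2 by simp
  also have "\<dots> = mat_adjoint (C * A) * C" unfolding C4 ..
  also have "\<dots> = (mat_adjoint A * mat_adjoint C) * C" by (subst adj_mult) simp_all
  also have "\<dots> = (((B * A) * mat_adjoint A) * mat_adjoint C) * C" using aA2 by simp
  also have "\<dots> = (B * A) * ((mat_adjoint A * mat_adjoint C) * C)" by simp
  also have "\<dots> = (B * A) * (mat_adjoint (C * A) * C)" by (subst adj_mult) simp_all
  also have "\<dots> = (B * A) * ((C * A) * C)" unfolding C4 ..
  also have "\<dots> = B * (A * C)" using C2 by simp
  finally have 2: "C = B * (A * C)" .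
  show ?thesis using 1 2 by simp
qed


lemma mp_facts:
  fixes A B :: "complex mat"
  assumes A: "A \<in> carrier_mat m n" and hB: "is_mp_inverse A B"
  shows "A * B \<in> carrier_mat m m" "A * mat_adjoint A \<in> carrier_mat m m" "mat_adjoint B * B \<in> carrier_mat m m"
    "(A * B) * (A * B) = A * B" "mat_adjoint (A * B) = A * B"
    "(A * B) * (A * mat_adjoint A) = A * mat_adjoint A"
    "(A * mat_adjoint A) * (A * B) = A * mat_adjoint A"
    "(mat_adjoint B * B) * (A * mat_adjoint A) = A * B"
    "mat_adjoint (A * mat_adjoint A) = A * mat_adjoint A"
proof -
  have B: "B \<in> carrier_mat n m" using hB[unfolded is_mp_inverse_def, THEN conjunct1] carrier_matD[OF A] by simp
  note cs[simp] = A B carrier_matD[OF A] carrier_matD[OF B] assoc_dim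
  note hB' = hB[unfolded is_mp_inverse_def]
  note B1 = hB'[THEN conjunct2, THEN conjunct1]
  note B2 = hB'[THEN conjunct2, THEN conjunct2, THEN conjunct1]
  note B3 = hB'[THEN conjunct2, THEN conjunct2, THEN conjunct2, THEN conjunct1]
  note B4 = hB'[THEN conjunct2, THEN conjunct2, THEN conjunct2, THEN conjunct2]
  have "A * (B * A) = A * B * A" by (rule assoc_dim[symmetric]) simp_all
  hence B1': "A * (B * A) = A" unfolding B1 .
  show "A * B \<in> carrier_mat m m" "A * mat_adjoint A \<in> carrier_mat m m" "mat_adjoint B * B \<in> carrier_mat m m"
    by (rule carrier_matI; simp)+
  have PP: "(A * B) * (A * B) = (A * (B * A)) * B" by simp
  thus "(A * B) * (A * B) = A * B" unfolding B1' .
  show "mat_adjoint (A * B) = A * B" by (rule B3)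
  have "(A * B) * (A * mat_adjoint A) = (A * (B * A)) * mat_adjoint A" by simp
  thus PM: "(A * B) * (A * mat_adjoint A) = A * mat_adjoint A" unfolding B1' .
  have Mh: "mat_adjoint (A * mat_adjoint A) = A * mat_adjoint A" by (subst adj_mult) simp_all
  thus "mat_adjoint (A * mat_adjoint A) = A * mat_adjoint A" .
  have "(A * mat_adjoint A) * (A * B) = mat_adjoint (mat_adjoint ((A * mat_adjoint A) * (A * B)))" by simp
  also have "\<dots> = mat_adjoint (mat_adjoint (A * B) * mat_adjoint (A * mat_adjoint A))" by (subst adj_mult) simp_all
  also have "\<dots> = mat_adjoint ((A * B) * (A * mat_adjoint A))" unfolding B3 Mh ..
  also have "\<dots> = A * mat_adjoint A" unfolding PM Mh ..
  finally show "(A * mat_adjoint A) * (A * B) = A * mat_adjoint A" .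
  have BAa: "B * (A * mat_adjoint A) = mat_adjoint A"
  proof -
    have "B * (A * mat_adjoint A) = (B * A) * mat_adjoint A" by simp
    also have "\<dots> = mat_adjoint (B * A) * mat_adjoint A" unfolding B4 ..
    also have "\<dots> = mat_adjoint (A * (B * A))" by (subst adj_mult) simp_all
    finally show ?thesis unfolding B1' .
  qed
  have "(mat_adjoint B * B) * (A * mat_adjoint A) = mat_adjoint B * (B * (A * mat_adjoint A))" by simp
  also have "\<dots> = mat_adjoint B * mat_adjoint A" unfolding BAa ..
  also have "\<dots> = mat_adjoint (A * B)" by (subst adj_mult) simp_all
  finally show "(mat_adjoint B * B) * (A * mat_adjoint A) = A * B" unfolding B3 .
qed

lemma core_all:
  fixes N X :: "complex mat"
  assumes N: "N \<in> carrier_mat m n" and hB: "is_mp_inverse N (mp_inverse N)" and X: "X \<in> carrier_mat m m"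
    and cond:
      "normal_mat (N * mat_adjoint N * X)
       \<or> (\<exists>c1 k1. c1 \<noteq> 0 \<and> k1 > 0 \<and>
            (N * mat_adjoint N * X) ^\<^sub>m k1 = c1 \<cdot>\<^sub>m (N * mp_inverse N))
       \<or> (\<exists>c2 l k2. c2 \<noteq> 0 \<and> l > 0 \<and> k2 > 0 \<and>
            (N * mat_adjoint N * X) ^\<^sub>m k2 = c2 \<cdot>\<^sub>m ((N * mat_adjoint N) ^\<^sub>m l))
       \<or> normal_mat (X * E_mat N)
       \<or> (\<exists>c3 k3. c3 \<noteq> 0 \<and> k3 > 0 \<and> (X * E_mat N) ^\<^sub>m k3 = c3 \<cdot>\<^sub>m E_mat N)
       \<or> N * mp_inverse N * X * E_mat N = 0\<^sub>m m m
       \<or> (\<exists>k4. k4 > 0 \<and> (N * mat_adjoint N) ^\<^sub>m k4 * X * E_mat N = 0\<^sub>m m m)"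
  shows "(N * mp_inverse N) * X * (1\<^sub>m m - N * mp_inverse N) = 0\<^sub>m m m"
proof -
  note f = mp_facts[OF N hB]
  have E: "E_mat N = 1\<^sub>m m - N * mp_inverse N" unfolding E_mat_def using carrier_matD[OF N] by simp
  note thms = f(1) f(2) f(3) X f(4) f(5) f(6) f(7) f(8) f(9)
  from cond[unfolded E] show ?thesis
  proof (elim disjE exE conjE)
    assume "normal_mat (N * mat_adjoint N * X)" thus ?thesis by (rule case1[OF thms])
  next
    fix c1 k1 assume "c1 \<noteq> 0" "k1 > 0" "(N * mat_adjoint N * X) ^\<^sub>m k1 = c1 \<cdot>\<^sub>m (N * mp_inverse N)"
    thus ?thesis by (rule case2[OF thms])
  next
    fix c2 l k2 assume "c2 \<noteq> 0" "l > 0" "k2 > 0" "(N * mat_adjoint N * X) ^\<^sub>m k2 = c2 \<cdot>\<^sub>m ((N * mat_adjoint N) ^\<^sub>m l)"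
    thus ?thesis by (rule case3[OF thms])
  next
    assume "normal_mat (X * (1\<^sub>m m - N * mp_inverse N))" thus ?thesis by (rule case4[OF thms])
  next
    fix c3 k3 assume "c3 \<noteq> 0" "k3 > 0" "(X * (1\<^sub>m m - N * mp_inverse N)) ^\<^sub>m k3 = c3 \<cdot>\<^sub>m (1\<^sub>m m - N * mp_inverse N)"
    thus ?thesis by (rule case5[OF thms])
  next
    assume "N * mp_inverse N * X * (1\<^sub>m m - N * mp_inverse N) = 0\<^sub>m m m" thus ?thesis .
  next
    fix k4 assume "k4 > 0" "(N * mat_adjoint N) ^\<^sub>m k4 * X * (1\<^sub>m m - N * mp_inverse N) = 0\<^sub>m m m"
    thus ?thesis by (rule K7[OF thms])
  qed
qed




definition dgm :: "nat \<Rightarrow> nat \<Rightarrow> (nat \<Rightarrow> complex) \<Rightarrow> complex mat" where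
  "dgm p q a = mat p q (\<lambda>(i,j). if i = j then a i else 0)"

lemma dgm_dims[simp]: "dim_row (dgm p q a) = p" "dim_col (dgm p q a) = q"
  unfolding dgm_def by simp_all

lemma dgm_index: "i < p \<Longrightarrow> j < q \<Longrightarrow> dgm p q a $$ (i,j) = (if i = j then a i else 0)"
  unfolding dgm_def by simp

lemma dgm_left: assumes "i < p" "j < dim_col Y" "dim_row Y = q"
  shows "(dgm p q a * Y) $$ (i,j) = (if i < q then a i * Y $$ (i,j) else 0)"
proof -
  have "(dgm p q a * Y) $$ (i,j) = (\<Sum>k = 0..<q. dgm p q a $$ (i,k) * Y $$ (k,j))"
    using assms by (simp add: scalar_prod_def)
  also have "\<dots> = (\<Sum>k = 0..<q. if k = i then a i * Y $$ (i,j) else 0)"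
    using assms by (intro sum.cong) (simp_all add: dgm_index)
  also have "\<dots> = (if i < q then a i * Y $$ (i,j) else 0)"
    by (simp add: sum.delta)
  finally show ?thesis .
qed

lemma dgm_right: assumes "i < dim_row Y" "j < q" "dim_col Y = p"
  shows "(Y * dgm p q a) $$ (i,j) = (if j < p then Y $$ (i,j) * a j else 0)"
proof -
  have "(Y * dgm p q a) $$ (i,j) = (\<Sum>k = 0..<p. Y $$ (i,k) * dgm p q a $$ (k,j))"
    using assms by (simp add: scalar_prod_def)
  also have "\<dots> = (\<Sum>k = 0..<p. if k = j then Y $$ (i,j) * a j else 0)"
    using assms by (intro sum.cong) (simp_all add: dgm_index)
  also have "\<dots> = (if j < p then Y $$ (i,j) * a j else 0)"
    by (simp add: sum.delta)
  finally show ?thesis .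
qed

lemma dgm_mult[simp]: "dgm p q a * dgm q s b = dgm p s (\<lambda>i. if i < q then a i * b i else 0)"
proof (rule eq_matI)
  fix i j assume "i < dim_row (dgm p s (\<lambda>i. if i < q then a i * b i else 0))"
    "j < dim_col (dgm p s (\<lambda>i. if i < q then a i * b i else 0))"
  hence i: "i < p" and j: "j < s" by simp_all
  show "(dgm p q a * dgm q s b) $$ (i, j) = dgm p s (\<lambda>i. if i < q then a i * b i else 0) $$ (i, j)"
  proof -
    have "(dgm p q a * dgm q s b) $$ (i,j) = (if i < q then a i * dgm q s b $$ (i,j) else 0)"
      by (rule dgm_left) (simp_all add: i j)
    thus ?thesis using i j by (simp add: dgm_index)
  qed
qed simp_all

lemma dgm_mult'[simp]: "dim_row Z = s \<Longrightarrow> dgm p q a * (dgm q s b * Z) = dgm p s (\<lambda>i. if i < q then a i * b i else 0) * Z"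
proof -
  assume z: "dim_row Z = s"
  have "dgm p q a * (dgm q s b * Z) = (dgm p q a * dgm q s b) * Z"
    by (rule assoc_mult_mat[symmetric, of _ p q _ s _ "dim_col Z"]; rule carrier_matI; simp add: z)
  thus ?thesis by simp
qed

lemma dgm_adj[simp]: "mat_adjoint (dgm p q a) = dgm q p (\<lambda>i. cnj (a i))"
proof (rule eq_matI)
  fix i j assume "i < dim_row (dgm q p (\<lambda>i. cnj (a i)))" "j < dim_col (dgm q p (\<lambda>i. cnj (a i)))"
  hence i: "i < q" and j: "j < p" by simp_all
  have "mat_adjoint (dgm p q a) $$ (i,j) = cnj (dgm p q a $$ (j,i))"
    unfolding mat_adjoint_def using i j by (simp add: mat_of_rows_def)
  thus "mat_adjoint (dgm p q a) $$ (i, j) = dgm q p (\<lambda>i. cnj (a i)) $$ (i, j)"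
    using i j by (simp add: dgm_index)
next
  show "dim_row (mat_adjoint (dgm p q a)) = dim_row (dgm q p (\<lambda>i. cnj (a i)))"
    unfolding mat_adjoint_def by simp
  show "dim_col (mat_adjoint (dgm p q a)) = dim_col (dgm q p (\<lambda>i. cnj (a i)))"
    unfolding mat_adjoint_def by simp
qed

lemma dgm_one: "dgm n n (\<lambda>i. 1) = 1\<^sub>m n"
  by (rule eq_matI) (simp_all add: dgm_index)



lemma rank_le_nr:
  fixes A :: "complex mat"
  assumes "A \<in> carrier_mat m n"
  shows "vec_space.rank m A \<le> m"
proof -
  interpret vec_space "TYPE(complex)" m .
  have "VectorSpace.subspace class_ring (span (set (cols A))) V"
    using span_is_subspace cols_dim assms by (metis carrier_matD(1))
  then show ?thesis unfolding rank_def
    using subspace_dim[OF _ fin_dim fin_dim_span_cols[OF assms]] dim_is_n by metis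
qed

lemma rank_le_nc':
  fixes A :: "complex mat"
  assumes "A \<in> carrier_mat m n"
  shows "vec_space.rank m A \<le> n"
proof -
  interpret vec_space "TYPE(complex)" m .
  show ?thesis using rank_le_nc[OF assms] .
qed

lemma unit_rules:
  assumes U: "unitary_mat m U"
  shows "U \<in> carrier_mat m m" "U * mat_adjoint U = 1\<^sub>m m" "mat_adjoint U * U = 1\<^sub>m m"
    "dim_row Z = m \<Longrightarrow> mat_adjoint U * (U * Z) = Z"
    "dim_row Z = m \<Longrightarrow> U * (mat_adjoint U * Z) = Z"
proof -
  show Uc: "U \<in> carrier_mat m m" and 1: "U * mat_adjoint U = 1\<^sub>m m" and 2: "mat_adjoint U * U = 1\<^sub>m m"
    using U unfolding unitary_mat_def by blast+
  note [simp] = carrier_matD[OF Uc]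
  assume z: "dim_row Z = m"
  have "mat_adjoint U * (U * Z) = (mat_adjoint U * U) * Z" by (rule assoc_dim[symmetric]) (simp_all add: z)
  thus "mat_adjoint U * (U * Z) = Z" unfolding 2 using z by simp
next
  show "U * (mat_adjoint U * Z) = Z" if z: "dim_row Z = m"
  proof -
    have Uc: "U \<in> carrier_mat m m" and 1: "U * mat_adjoint U = 1\<^sub>m m"
      using U unfolding unitary_mat_def by blast+
    note [simp] = carrier_matD[OF Uc]
    have "U * (mat_adjoint U * Z) = (U * mat_adjoint U) * Z" by (rule assoc_dim[symmetric]) (simp_all add: z)
    thus ?thesis unfolding 1 using z by simp
  qed
qed

theorem lemma2p2:
  fixes N U V S X :: "complex mat" and m n r :: nat
  assumes N: "N \<in> carrier_mat m n"
    and rk: "vec_space.rank m N = r"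
    and S: "S \<in> carrier_mat r r" "diagonal_mat S"
    and Spos: "\<forall>i<r. S $$ (i,i) \<in> \<real> \<and> Re (S $$ (i,i)) > 0"
    and U: "unitary_mat m U" and V: "unitary_mat n V"
    and svd: "N = U * four_block_mat S (0\<^sub>m r (n - r)) (0\<^sub>m (m - r) r) (0\<^sub>m (m - r) (n - r))
                  * mat_adjoint V"
    and X: "X \<in> carrier_mat m m"
    and cond:
      "normal_mat (N * mat_adjoint N * X)
       \<or> (\<exists>c1 k1. c1 \<noteq> 0 \<and> k1 > 0 \<and>
            (N * mat_adjoint N * X) ^\<^sub>m k1 = c1 \<cdot>\<^sub>m (N * mp_inverse N))
       \<or> (\<exists>c2 l k2. c2 \<noteq> 0 \<and> l > 0 \<and> k2 > 0 \<and>
            (N * mat_adjoint N * X) ^\<^sub>m k2 = c2 \<cdot>\<^sub>m ((N * mat_adjoint N) ^\<^sub>m l))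
       \<or> normal_mat (X * E_mat N)
       \<or> (\<exists>c3 k3. c3 \<noteq> 0 \<and> k3 > 0 \<and> (X * E_mat N) ^\<^sub>m k3 = c3 \<cdot>\<^sub>m E_mat N)
       \<or> N * mp_inverse N * X * E_mat N = 0\<^sub>m m m
       \<or> (\<exists>k4. k4 > 0 \<and> (N * mat_adjoint N) ^\<^sub>m k4 * X * E_mat N = 0\<^sub>m m m)"
  shows "\<exists>X1 X2 X4. X1 \<in> carrier_mat r r \<and> X2 \<in> carrier_mat (m - r) r \<and>
           X4 \<in> carrier_mat (m - r) (m - r) \<and>
           X = U * four_block_mat X1 (0\<^sub>m r (m - r)) X2 X4 * mat_adjoint U"
proof -
  have rm: "r \<le> m" using rank_le_nr[OF N] rk by simp
  have rn: "r \<le> n" using rank_le_nc'[OF N] rk by simp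
  note Ur = unit_rules[OF U] and Vr = unit_rules[OF V]
  note dims[simp] = carrier_matD[OF N] carrier_matD[OF X] carrier_matD[OF Ur(1)] carrier_matD[OF Vr(1)]
    carrier_matD[OF S(1)]
  have Snz: "S $$ (i,i) \<noteq> 0" if "i < r" for i using Spos that by fastforce
  define s where "s = (\<lambda>i. if i < r then S $$ (i,i) else 0)"
  define t where "t = (\<lambda>i. if i < r then 1 / S $$ (i,i) else 0)"
  define d where "d = (\<lambda>i. if i < r then 1 else (0::complex))"
  have K: "four_block_mat S (0\<^sub>m r (n - r)) (0\<^sub>m (m - r) r) (0\<^sub>m (m - r) (n - r)) = dgm m n s"
  proof (rule eq_matI)
    fix i j assume "i < dim_row (dgm m n s)" "j < dim_col (dgm m n s)"
    hence i: "i < m" and j: "j < n" by simp_all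
    have "four_block_mat S (0\<^sub>m r (n - r)) (0\<^sub>m (m - r) r) (0\<^sub>m (m - r) (n - r)) $$ (i,j)
      = (if i < r then if j < r then S $$ (i,j) else 0 else 0)"
      using i j rm rn by simp
    also have "\<dots> = dgm m n s $$ (i,j)"
      using S(2) i j unfolding diagonal_mat_def s_def by (simp add: dgm_index)
    finally show "four_block_mat S (0\<^sub>m r (n - r)) (0\<^sub>m (m - r) r) (0\<^sub>m (m - r) (n - r)) $$ (i,j) = dgm m n s $$ (i,j)" .
  qed (use rm rn in simp_all)
  have e1: "(\<lambda>i. if i < n then s i * t i else 0) = d"
    using rn Snz unfolding s_def t_def d_def by (intro ext) simp
  have e2: "(\<lambda>i. if i < m then t i * s i else 0) = d"
    using rm Snz unfolding s_def t_def d_def by (intro ext) simp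
  have e3: "(\<lambda>i. if i < m then d i * s i else 0) = s"
    using rm unfolding s_def d_def by (intro ext) simp
  have e4: "(\<lambda>i. if i < n then s i * d i else 0) = s"
    using rn unfolding s_def d_def by (intro ext) simp
  have e5: "(\<lambda>i. if i < n then d i * t i else 0) = t"
    using rn unfolding t_def d_def by (intro ext) simp
  have e6: "(\<lambda>i. if i < m then t i * d i else 0) = t"
    using rm unfolding t_def d_def by (intro ext) simp
  have e7: "(\<lambda>i. cnj (d i)) = d" unfolding d_def by (intro ext) simp
  note es[simp] = e1 e2 e3 e4 e5 e6 e7
  note ur[simp] = Ur(2-5) Vr(2-5) assoc_dim adj_mult
  define Nd where "Nd = V * (dgm n m t * mat_adjoint U)"
  have svd': "N = U * (dgm m n s * mat_adjoint V)" using svd unfolding K by simp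
  have NNd: "N * Nd = U * (dgm m m d * mat_adjoint U)" unfolding svd' Nd_def by simp
  have NdN: "Nd * N = V * (dgm n n d * mat_adjoint V)" unfolding svd' Nd_def by simp
  have P1: "N * Nd * N = N"
  proof -
    have "N * Nd * N = U * (dgm m m d * mat_adjoint U) * (U * (dgm m n s * mat_adjoint V))"
      unfolding NNd by (rule arg_cong[OF svd'])
    also have "\<dots> = U * (dgm m n s * mat_adjoint V)" by simp
    finally show ?thesis using svd' by simp
  qed
  have P2: "Nd * N * Nd = Nd"
  proof -
    have "Nd * N * Nd = V * (dgm n n d * mat_adjoint V) * (V * (dgm n m t * mat_adjoint U))"
      unfolding NdN by (rule arg_cong[OF Nd_def])
    also have "\<dots> = V * (dgm n m t * mat_adjoint U)" by simp
    finally show ?thesis unfolding Nd_def .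
  qed
  have P3: "mat_adjoint (N * Nd) = N * Nd" unfolding NNd by simp
  have P4: "mat_adjoint (Nd * N) = Nd * N" unfolding NdN by simp
  have Ndc: "Nd \<in> carrier_mat (dim_col N) (dim_row N)" unfolding Nd_def by (rule carrier_matI) simp_all
  have mpi: "is_mp_inverse N Nd" unfolding is_mp_inverse_def using Ndc P1 P2 P3 P4 by blast
  have mpN: "mp_inverse N = Nd" unfolding mp_inverse_def
    by (rule the_equality[where P="is_mp_inverse N", OF mpi]) (rule mp_unique[OF N _ mpi])
  have hB: "is_mp_inverse N (mp_inverse N)" unfolding mpN by (rule mpi)
  have Z: "(N * mp_inverse N) * X * (1\<^sub>m m - N * mp_inverse N) = 0\<^sub>m m m"
    by (rule core_all[OF N hB X cond])
  define D where "D = dgm m m d"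
  define P where "P = N * Nd"
  have PD: "P = U * (D * mat_adjoint U)" unfolding P_def D_def NNd ..
  have Z': "P * X * (1\<^sub>m m - P) = 0\<^sub>m m m" using Z unfolding mpN P_def .
  define Y where "Y = mat_adjoint U * (X * U)"
  have Yc: "Y \<in> carrier_mat m m" unfolding Y_def by (rule carrier_matI) simp_all
  note [simp] = carrier_matD[OF Yc]
  have Pc: "P \<in> carrier_mat m m" unfolding PD D_def by (rule carrier_matI) simp_all
  have Dc: "D \<in> carrier_mat m m" unfolding D_def by (rule carrier_matI) simp_all
  note [simp] = carrier_matD[OF Pc] carrier_matD[OF Dc]
  have EU: "(1\<^sub>m m - P) * U = U - U * D"
  proof -
    have "(1\<^sub>m m - P) * U = 1\<^sub>m m * U - P * U"
      by (rule minus_mult_distrib_mat[of _ m m _ _ m]) (simp_all add: Pc Ur(1))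
    also have "P * U = U * D" unfolding PD D_def by simp
    finally show ?thesis by simp
  qed
  have "0\<^sub>m m m = mat_adjoint U * ((P * X * (1\<^sub>m m - P)) * U)" unfolding Z' by simp
  also have "\<dots> = mat_adjoint U * (P * (X * ((1\<^sub>m m - P) * U)))"
    by (simp del: adj_mult)
  also have "\<dots> = mat_adjoint U * (P * (X * U - X * (U * D)))" unfolding EU
    by (subst mult_minus_distrib_mat[of _ m m _ m]) (rule refl | (rule carrier_matI; simp))+
  also have "\<dots> = mat_adjoint U * (P * (X * U) - P * (X * (U * D)))"
    by (subst mult_minus_distrib_mat[of _ m m _ m]) (rule refl | (rule carrier_matI; simp))+
  also have "\<dots> = mat_adjoint U * (P * (X * U)) - mat_adjoint U * (P * (X * (U * D)))"
    by (subst mult_minus_distrib_mat[of _ m m _ m]) (rule refl | (rule carrier_matI; simp))+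
  also have "\<dots> = D * Y - D * (Y * D)" unfolding PD Y_def by simp
  finally have W: "D * Y - D * (Y * D) = 0\<^sub>m m m" by simp
  have Y0: "Y $$ (i, j) = 0" if i: "i < r" and j: "r \<le> j" "j < m" for i j
  proof -
    have "(D * Y - D * (Y * D)) $$ (i,j) = 0" unfolding W using i j rm by simp
    moreover have "(D * Y - D * (Y * D)) $$ (i,j) = (D * Y) $$ (i,j) - (D * (Y * D)) $$ (i,j)"
      using i j rm by simp
    moreover have "(D * Y) $$ (i,j) = Y $$ (i,j)" unfolding D_def using i j rm
      by (subst dgm_left) (simp_all add: d_def)
    moreover have "(D * (Y * D)) $$ (i,j) = 0"
    proof -
      have a: "(dgm m m d * (Y * dgm m m d)) $$ (i,j) = (if i < m then d i * (Y * dgm m m d) $$ (i,j) else 0)"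
        by (rule dgm_left) (use i j rm in simp_all)
      have b: "(Y * dgm m m d) $$ (i,j) = (if j < m then Y $$ (i,j) * d j else 0)"
        by (rule dgm_right) (use i j rm in simp_all)
      show ?thesis unfolding D_def a b using i j rm by (simp add: d_def)
    qed
    ultimately show ?thesis by simp
  qed
  obtain Y1 Y2 Y3 Y4 where sb: "split_block Y r r = (Y1, Y2, Y3, Y4)" by (metis prod_cases4)
  have dimY: "dim_row Y = r + (m - r)" "dim_col Y = r + (m - r)" using rm by simp_all
  note spl = split_block[OF sb dimY]
  have Y2: "Y2 = 0\<^sub>m r (m - r)"
  proof -
    have "Y2 = mat r (m - r) (\<lambda>(i,j). Y $$ (i, j + r))" using sb unfolding split_block_def Let_def by simp
    also have "\<dots> = 0\<^sub>m r (m - r)" by (rule eq_matI) (simp_all add: Y0)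
    finally show ?thesis .
  qed
  have "X = U * (Y * mat_adjoint U)" unfolding Y_def by simp
  also have "\<dots> = U * Y * mat_adjoint U" by simp
  finally have "X = U * four_block_mat Y1 (0\<^sub>m r (m - r)) Y3 Y4 * mat_adjoint U"
    using spl(5) unfolding Y2 by simp
  thus ?thesis using spl(1) spl(3) spl(4) by blast
qed

end
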